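(* Let $G$ be a connected graph with $n$ nodes and fix $t\ge 0$. Then there exists an index $i\in\{1,\dots,n\}$ such that, writing $e_i$ for the $i$-th standard basis vector, $$\mathbb E\|v(t)-\bar v\|_1\ \text{ for } v(0)=e_i \;\ge\; \mathbb E\|v(t)-\bar v\|_1\ \text{ for } v(0)=w$$ for every $w\in\mathbb R^n$ with $\|w\|_1=1$. That is, the maximum of $\mathbb E\|v(t)-\bar v\|_1$ over all initial vectors of unit $L^1$ norm is attained at some $e_i$.
   Context: Let $G=(V,E)$ be a finite, undirected, connected graph with $V=\{1,\dots,n\}$. The averaging process on $G$: the state vector $v(t)\in\mathbb R^n$, $t=0,1,2,\dots$, starts from a given $v(0)$; at each step $t\ge 1$ an edge $\{i,j\}\in E$ is chosen uniformly at random (independently of all previous choices) and both $v_i$ and $v_j$ are replaced by $(v_i+v_j)/2$, all other coordinates unchanged. Let $\bar v=(a,\dots,a)^T$ with $a=\frac1n\sum_i v_i(0)$ (so $\bar v$ depends on the initial vector). *)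

theory Defs
  imports Complex_Main
begin

(* Vertices are 0..<n (0-based version of {1..n}); vectors in R^n are
   functions nat => real, only the coordinates k < n matter. *)

definition graph_on :: "nat \<Rightarrow> nat set set \<Rightarrow> bool" where
  "graph_on n E \<longleftrightarrow> (\<forall>e\<in>E. \<exists>i j. i < n \<and> j < n \<and> i \<noteq> j \<and> e = {i, j})"

definition adj_rel :: "nat set set \<Rightarrow> (nat \<times> nat) set" where
  "adj_rel E = {(i, j). {i, j} \<in> E}"

definition connected_graph :: "nat \<Rightarrow> nat set set \<Rightarrow> bool" where
  "connected_graph n E \<longleftrightarrow> graph_on n E \<and>
     (\<forall>i<n. \<forall>j<n. (i, j) \<in> (adj_rel E)\<^sup>*)"

definition avg_step :: "nat set \<Rightarrow> (nat \<Rightarrow> real) \<Rightarrow> (nat \<Rightarrow> real)" where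
  "avg_step e v = (\<lambda>k. if k \<in> e then (\<Sum>l\<in>e. v l) / 2 else v k)"

fun run_process :: "nat set list \<Rightarrow> (nat \<Rightarrow> real) \<Rightarrow> (nat \<Rightarrow> real)" where
  "run_process [] v = v"
| "run_process (e # es) v = run_process es (avg_step e v)"

definition l1norm :: "nat \<Rightarrow> (nat \<Rightarrow> real) \<Rightarrow> real" where
  "l1norm n v = (\<Sum>k<n. \<bar>v k\<bar>)"

definition mean_vec :: "nat \<Rightarrow> (nat \<Rightarrow> real) \<Rightarrow> (nat \<Rightarrow> real)" where
  "mean_vec n v = (\<lambda>k. (\<Sum>l<n. v l) / real n)"

(* E || v(t) - vbar ||_1 : edges chosen i.i.d. uniformly from E, so every
   sequence of t edges has probability 1 / |E|^t *)
definition expected_dev :: "nat \<Rightarrow> nat set set \<Rightarrow> nat \<Rightarrow> (nat \<Rightarrow> real) \<Rightarrow> real" where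
  "expected_dev n E t v0 =
     (\<Sum>es\<in>{es. length es = t \<and> set es \<subseteq> E}.
        l1norm n (\<lambda>k. run_process es v0 k - mean_vec n v0 k)) / real (card E) ^ t"

definition std_basis :: "nat \<Rightarrow> (nat \<Rightarrow> real)" where
  "std_basis i = (\<lambda>k. if k = i then 1 else 0)"

end

theory Submission
  imports Defs
begin

lemma run_lin:
  "run_process es (\<lambda>k. \<Sum>j\<in>J. c j * u j k) = (\<lambda>k. \<Sum>j\<in>J. c j * run_process es (u j) k)"
proof (induction es arbitrary: u)
  case Nil
  then show ?case by simp
next
  case (Cons e es)
  have "avg_step e (\<lambda>k. \<Sum>j\<in>J. c j * u j k) = (\<lambda>k. \<Sum>j\<in>J. c j * avg_step e (u j) k)"
    unfolding avg_step_def
    by (auto simp: sum.swap[of _ e] sum_distrib_left sum_divide_distrib)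
  then show ?case using Cons.IH[of "\<lambda>j. avg_step e (u j)"] by simp
qed

lemma run_local:
  assumes "\<forall>e\<in>set es. e \<subseteq> {..<n}" "\<forall>k<n. v k = v' k" "k < n"
  shows "run_process es v k = run_process es v' k"
  using assms
proof (induction es arbitrary: v v')
  case Nil
  then show ?case by simp
next
  case (Cons e es)
  have "\<forall>k<n. avg_step e v k = avg_step e v' k"
  proof (intro allI impI)
    fix k assume "k < n"
    have "(\<Sum>l\<in>e. v l) = (\<Sum>l\<in>e. v' l)"
      using Cons.prems(1,2) by (intro sum.cong) auto
    then show "avg_step e v k = avg_step e v' k"
      unfolding avg_step_def using Cons.prems \<open>k<n\<close> by auto
  qed
  then show ?case using Cons by simp
qed

theorem theorem2:
  fixes n :: nat and E :: "nat set set" and t :: nat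
  assumes "n \<ge> 1"
    and "connected_graph n E"
  shows "\<exists>i<n. \<forall>w :: nat \<Rightarrow> real. l1norm n w = 1 \<longrightarrow>
           expected_dev n E t w \<le> expected_dev n E t (std_basis i)"
proof -
  define ES where "ES = {es. length es = t \<and> set es \<subseteq> E}"
  define D where "D = (\<lambda>es v k. run_process es v k - mean_vec n v k)"
  define S where "S = (\<lambda>j. \<Sum>es\<in>ES. l1norm n (D es (std_basis j)))"
  have sub: "\<forall>e\<in>E. e \<subseteq> {..<n}"
    using assms(2) unfolding connected_graph_def graph_on_def by auto
  have lin: "D es w k = (\<Sum>j<n. w j * D es (std_basis j) k)" if "es \<in> ES" "k < n" for es w k
  proof -
    have "run_process es w k = run_process es (\<lambda>k. \<Sum>j<n. w j * std_basis j k) k"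
    proof (rule run_local[of es n])
      show "\<forall>e\<in>set es. e \<subseteq> {..<n}" using that sub unfolding ES_def by auto
      show "k < n" by fact
      show "\<forall>k<n. w k = (\<Sum>j<n. w j * std_basis j k)"
      proof (intro allI impI)
        fix k :: nat assume "k < n"
        have "(\<Sum>j<n. w j * std_basis j k) = (\<Sum>j<n. if j = k then w j else 0)"
          unfolding std_basis_def by (intro sum.cong) auto
        also have "\<dots> = w k" using \<open>k < n\<close> by (simp add: sum.delta')
        finally show "w k = (\<Sum>j<n. w j * std_basis j k)" by simp
      qed
    qed
    also have "\<dots> = (\<Sum>j<n. w j * run_process es (std_basis j) k)"
      by (simp add: run_lin)
    finally have r: "run_process es w k = (\<Sum>j<n. w j * run_process es (std_basis j) k)" .
    have m: "mean_vec n w k = (\<Sum>j<n. w j * mean_vec n (std_basis j) k)"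
    proof -
      have "mean_vec n (std_basis j) k = 1 / real n" if "j < n" for j
        unfolding mean_vec_def std_basis_def using that by simp
      then have "(\<Sum>j<n. w j * mean_vec n (std_basis j) k) = (\<Sum>j<n. w j * (1 / real n))"
        by (intro sum.cong) auto
      then show ?thesis unfolding mean_vec_def by (simp add: sum_divide_distrib)
    qed
    show ?thesis unfolding D_def r m by (simp add: sum_subtractf right_diff_distrib)
  qed
  have bound: "l1norm n (D es w) \<le> (\<Sum>j<n. \<bar>w j\<bar> * l1norm n (D es (std_basis j)))"
    if "es \<in> ES" for es w
  proof -
    have "l1norm n (D es w) = (\<Sum>k<n. \<bar>\<Sum>j<n. w j * D es (std_basis j) k\<bar>)"
      unfolding l1norm_def using lin[OF that] by (intro sum.cong) auto
    also have "\<dots> \<le> (\<Sum>k<n. \<Sum>j<n. \<bar>w j\<bar> * \<bar>D es (std_basis j) k\<bar>)"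
      by (intro sum_mono) (metis (no_types, lifting) abs_mult sum.cong sum_abs)
    also have "\<dots> = (\<Sum>j<n. \<bar>w j\<bar> * l1norm n (D es (std_basis j)))"
      unfolding l1norm_def by (subst sum.swap) (simp add: sum_distrib_left)
    finally show ?thesis .
  qed
  have "finite (S ` {..<n})" "S ` {..<n} \<noteq> {}" using assms(1) by (auto simp: lessThan_empty_iff)
  then obtain i where i: "i < n" "S i = Max (S ` {..<n})"
    using Max_in by (metis imageE lessThan_iff)
  have imax: "S j \<le> S i" if "j < n" for j
    using i that by simp
  show ?thesis
  proof (intro exI[of _ i] conjI allI impI)
    show "i < n" by fact
    fix w :: "nat \<Rightarrow> real" assume w: "l1norm n w = 1"
    have "(\<Sum>es\<in>ES. l1norm n (D es w)) \<le> (\<Sum>es\<in>ES. \<Sum>j<n. \<bar>w j\<bar> * l1norm n (D es (std_basis j)))"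
      by (intro sum_mono bound)
    also have "\<dots> = (\<Sum>j<n. \<bar>w j\<bar> * S j)"
      unfolding S_def by (subst sum.swap) (simp add: sum_distrib_left)
    also have "\<dots> \<le> (\<Sum>j<n. \<bar>w j\<bar> * S i)"
      by (intro sum_mono mult_left_mono imax) auto
    also have "\<dots> = S i" using w unfolding l1norm_def by (simp add: sum_distrib_right[symmetric])
    finally have "(\<Sum>es\<in>ES. l1norm n (D es w)) \<le> S i" .
    then show "expected_dev n E t w \<le> expected_dev n E t (std_basis i)"
      unfolding expected_dev_def ES_def[symmetric] using S_def D_def
      by (intro divide_right_mono) auto
  qed
qed

end
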